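(* For all integers $n\ge 1$ and $k\ge 2$, $$d_k(n+1)=d_{k-2}(n)+3\,d_{k-1}(n)+d_k(n)+2\,s_k(n).$$
   Context: For $n\ge 1$, the $2\times n$ board consists of $2n$ unit squares $x_0,\dots,x_{2n-1}$ arranged in 2 rows and $n$ columns, labeled with the top row first (left to right, $x_0,\dots,x_{n-1}$... ) — more precisely, labeled so that $x_{2i}$ and $x_{2i+1}$ form column $i$ ($i=0,\dots,n-1$), with $x_{2n-2},x_{2n-1}$ the two squares of the rightmost column. Two squares are adjacent iff they share an edge. A piece is a nonempty set of squares that is connected under adjacency. A division of the board into $k$ pieces is a partition of the set of all $2n$ squares into exactly $k$ pieces. $d_k(n)$ denotes the number of divisions of the $2\times n$ board into $k$ pieces (so $d_0(n)=0$, $d_1(n)=1$). $s_k(n)$ denotes the number of such divisions in which the two squares of the rightmost column lie in different pieces. *)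

theory Defs
  imports Main
begin

text \<open>Squares of the 2 x n board are the naturals 0,...,2n-1; square j lies in
column j div 2 and row j mod 2, so x_{2i}, x_{2i+1} form column i.\<close>

definition board :: "nat \<Rightarrow> nat set" where
  "board n = {..<2*n}"

definition adjacent :: "nat \<Rightarrow> nat \<Rightarrow> bool" where
  "adjacent i j \<longleftrightarrow>
     (i div 2 = j div 2 \<and> i \<noteq> j) \<or>
     (i mod 2 = j mod 2 \<and> (i div 2 + 1 = j div 2 \<or> j div 2 + 1 = i div 2))"

definition connected_set :: "nat set \<Rightarrow> bool" where
  "connected_set A \<longleftrightarrow>
     (\<forall>x\<in>A. \<forall>y\<in>A. (x, y) \<in> {(a, b). a \<in> A \<and> b \<in> A \<and> adjacent a b}\<^sup>*)"

definition piece :: "nat set \<Rightarrow> bool" where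
  "piece A \<longleftrightarrow> A \<noteq> {} \<and> connected_set A"

definition division :: "nat \<Rightarrow> nat \<Rightarrow> nat set set \<Rightarrow> bool" where
  "division n k P \<longleftrightarrow>
     \<Union>P = board n \<and>
     (\<forall>A\<in>P. \<forall>B\<in>P. A \<noteq> B \<longrightarrow> A \<inter> B = {}) \<and>
     (\<forall>A\<in>P. piece A) \<and>
     finite P \<and> card P = k"

definition d :: "nat \<Rightarrow> nat \<Rightarrow> nat" where
  "d k n = card {P. division n k P}"

definition s :: "nat \<Rightarrow> nat \<Rightarrow> nat" where
  "s k n = card {P. division n k P \<and>
                    (\<forall>A\<in>P. \<not> (2*n - 2 \<in> A \<and> 2*n - 1 \<in> A))}"

end

theory Submission
  imports Defs
begin


definition E :: "nat set \<Rightarrow> (nat \<times> nat) set" where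
  "E A = {(a, b). a \<in> A \<and> b \<in> A \<and> adjacent a b}"

lemma conn_E: "connected_set A \<longleftrightarrow> (\<forall>x\<in>A. \<forall>y\<in>A. (x, y) \<in> (E A)\<^sup>*)"
  unfolding connected_set_def E_def by simp

lemma adj_sym: "adjacent x y \<Longrightarrow> adjacent y x"
  unfolding adjacent_def by auto

lemma E_mono: "A \<subseteq> B \<Longrightarrow> (x,y) \<in> (E A)\<^sup>* \<Longrightarrow> (x,y) \<in> (E B)\<^sup>*"
  by (rule rtrancl_mono[THEN subsetD, of "E A" "E B"]) (auto simp: E_def)

lemma E_sym: "(x,y) \<in> (E A)\<^sup>* \<Longrightarrow> (y,x) \<in> (E A)\<^sup>*"
proof (induction rule: rtrancl_induct)
  case base then show ?case by simp
next
  case (step y z)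
  then have "(z,y) \<in> E A" by (auto simp: E_def adj_sym)
  then show ?case using step by (meson converse_rtrancl_into_rtrancl)
qed

lemma conn_union:
  assumes "connected_set X" "connected_set Y" "x \<in> X" "y \<in> Y" "adjacent x y"
  shows "connected_set (X \<union> Y)"
proof -
  have X: "\<And>u v. u \<in> X \<Longrightarrow> v \<in> X \<Longrightarrow> (u,v) \<in> (E (X \<union> Y))\<^sup>*"
    using assms(1) by (auto simp: conn_E intro: E_mono[of X])
  have Y: "\<And>u v. u \<in> Y \<Longrightarrow> v \<in> Y \<Longrightarrow> (u,v) \<in> (E (X \<union> Y))\<^sup>*"
    using assms(2) by (auto simp: conn_E intro: E_mono[of Y])
  have xy: "(x,y) \<in> (E (X \<union> Y))\<^sup>*" using assms(3-5) by (auto simp: E_def)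
  have "\<And>u v. u \<in> X \<Longrightarrow> v \<in> Y \<Longrightarrow> (u,v) \<in> (E (X \<union> Y))\<^sup>*"
    by (meson X Y xy assms(3,4) rtrancl_trans)
  then show ?thesis using X Y E_sym unfolding conn_E by blast
qed

lemma conn_single: "connected_set {x}"
  by (simp add: conn_E)

lemma piece_single: "piece {x}" by (simp add: piece_def conn_single)

lemma piece_pair: "adjacent x y \<Longrightarrow> piece {x, y}"
  using conn_union[OF conn_single conn_single, of x x y y] by (simp add: piece_def insert_commute)

lemma boundary:
  assumes "connected_set A" "x \<in> A" "x \<in> S" "y \<in> A" "y \<notin> S"
  shows "\<exists>u w. u \<in> A \<inter> S \<and> w \<in> A - S \<and> adjacent u w"
proof -
  have "(x,y) \<in> (E A)\<^sup>*" using assms conn_E by blast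
  then show ?thesis using assms(5)
  proof (induction rule: rtrancl_induct)
    case base then show ?case using assms(3) by simp
  next
    case (step y z)
    show ?case
    proof (cases "y \<in> S")
      case True then show ?thesis using step by (auto simp: E_def)
    next
      case False then show ?thesis using step.IH by blast
    qed
  qed
qed


lemma adj_a: "n \<ge> 1 \<Longrightarrow> adjacent (2*n) w \<Longrightarrow> w < 2*n+2 \<Longrightarrow> w = 2*n-2 \<or> w = 2*n+1"
  unfolding adjacent_def by (auto; arith)
lemma adj_b: "n \<ge> 1 \<Longrightarrow>adjacent (2*n+1) w \<Longrightarrow> w < 2*n+2 \<Longrightarrow> w = 2*n-1 \<or> w = 2*n"
  unfolding adjacent_def by (auto; arith)
lemma adj_facts: "n \<ge> 1 \<Longrightarrow> adjacent (2*n-2) (2*n-1)" "n \<ge> 1 \<Longrightarrow> adjacent (2*n-2) (2*n)"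
  "n \<ge> 1 \<Longrightarrow> adjacent (2*n-1) (2*n+1)" "adjacent (2*n) (2*n+1)"
  unfolding adjacent_def by (auto; arith)+

lemma conn_remove:
  assumes n1: "n \<ge> 1" and sub: "A \<subseteq> board (Suc n)" and c: "connected_set A"
  shows "connected_set (A - {2*n, 2*n+1})"
proof -
  define A' where "A' = A - {2*n, 2*n+1}"
  have pq: "adjacent (2*n-2) (2*n-1)" "adjacent (2*n-1) (2*n-2)"
    using adj_facts(1)[OF n1] adj_sym by auto
  have lt: "\<And>z. z \<in> A \<Longrightarrow> z < 2*n+2" using sub by (auto simp: board_def)
  { fix u v assume u: "u \<in> A'" and v: "v \<in> A'"
    have "(u,v) \<in> (E A)\<^sup>*" using u v c by (auto simp: A'_def conn_E)
    then have "(v \<in> A' \<longrightarrow> (u,v) \<in> (E A')\<^sup>*) \<and>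
        (v \<in> {2*n, 2*n+1} \<longrightarrow> (\<exists>w\<in>A'. w \<in> {2*n-2, 2*n-1} \<and> (u,w) \<in> (E A')\<^sup>*))"
    proof (induction rule: rtrancl_induct)
      case base then show ?case using u by (auto simp: A'_def)
    next
      case (step y z)
      have yz: "y \<in> A" "z \<in> A" "adjacent y z" using step(2) by (auto simp: E_def)
      have yA: "y \<in> A' \<or> y \<in> {2*n, 2*n+1}" using yz by (auto simp: A'_def)
      show ?case
      proof (intro conjI impI)
        assume zA: "z \<in> A'"
        show "(u,z) \<in> (E A')\<^sup>*"
        proof (cases "y \<in> A'")
          case True
          then have "(y,z) \<in> E A'" using zA yz by (auto simp: E_def)
          then show ?thesis using True step.IH by (meson rtrancl.rtrancl_into_rtrancl)
        next
          case False
          then have yab: "y \<in> {2*n, 2*n+1}" using yA by auto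
          then obtain w where w: "w \<in> A'" "w \<in> {2*n-2, 2*n-1}" "(u,w) \<in> (E A')\<^sup>*"
            using step.IH by auto
          have "z \<in> {2*n-2, 2*n-1}"
            using yab adj_a[OF n1 _ lt[OF yz(2)]] adj_b[OF n1 _ lt[OF yz(2)]] yz(3) zA
            by (auto simp: A'_def)
          then have "w = z \<or> (w,z) \<in> E A'" using w zA pq by (auto simp: E_def)
          then show ?thesis using w by (meson rtrancl.rtrancl_into_rtrancl)
        qed
      next
        assume zab: "z \<in> {2*n, 2*n+1}"
        show "\<exists>w\<in>A'. w \<in> {2*n-2, 2*n-1} \<and> (u,w) \<in> (E A')\<^sup>*"
        proof (cases "y \<in> A'")
          case True
          have "adjacent z y" using yz adj_sym by auto
          then have "y \<in> {2*n-2, 2*n-1}"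
            using zab adj_a[OF n1 _ lt[OF yz(1)]] adj_b[OF n1 _ lt[OF yz(1)]] True
            by (auto simp: A'_def)
          then show ?thesis using True step.IH by blast
        next
          case False
          then show ?thesis using yA step.IH by blast
        qed
      qed
    qed
    then have "(u,v) \<in> (E A')\<^sup>*" using v by blast
  }
  then show ?thesis unfolding A'_def conn_E by blast
qed

definition pt :: "nat set \<Rightarrow> nat set set \<Rightarrow> bool" where
  "pt U P \<longleftrightarrow> \<Union>P = U \<and> (\<forall>A\<in>P. \<forall>B\<in>P. A \<noteq> B \<longrightarrow> A \<inter> B = {}) \<and>
     (\<forall>A\<in>P. piece A) \<and> finite P"

lemma division_pt: "division n k P \<longleftrightarrow> pt (board n) P \<and> card P = k"
  unfolding division_def pt_def by auto

definition join :: "nat set set \<Rightarrow> nat \<Rightarrow> nat set \<Rightarrow> nat set set" where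
  "join P x Y = (\<lambda>A. if x \<in> A then A \<union> Y else A) ` P"

definition rem :: "nat \<Rightarrow> nat set set \<Rightarrow> nat set set" where
  "rem n P = (\<lambda>A. A - {2*n, 2*n+1}) ` P - {{}}"

lemma pt_insert:
  assumes "pt U P" "Y \<inter> U = {}" "piece Y"
  shows "pt (U \<union> Y) (insert Y P) \<and> card (insert Y P) = Suc (card P)"
proof -
  have "Y \<notin> P" using assms unfolding pt_def piece_def by blast
  then show ?thesis using assms unfolding pt_def by auto
qed

lemma pt_join:
  assumes pt: "pt U P" and x: "x \<in> U" and Y: "Y \<inter> U = {}" "piece Y" and y: "y \<in> Y" "adjacent x y"
  shows "pt (U \<union> Y) (join P x Y) \<and> card (join P x Y) = card P"
proof -
  define f where "f = (\<lambda>A. if x \<in> A then A \<union> Y else A)"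
  have sub: "\<And>A. A \<in> P \<Longrightarrow> A \<subseteq> U" using pt unfolding pt_def by auto
  have dis: "\<And>A B. A \<in> P \<Longrightarrow> B \<in> P \<Longrightarrow> A \<noteq> B \<Longrightarrow> A \<inter> B = {}" using pt unfolding pt_def by auto
  have pc: "\<And>A. A \<in> P \<Longrightarrow> piece A" using pt unfolding pt_def by auto
  obtain A0 where A0: "A0 \<in> P" "x \<in> A0" using pt x unfolding pt_def by auto
  have inj: "inj_on f P"
  proof (rule inj_onI)
    fix A B assume AB: "A \<in> P" "B \<in> P" "f A = f B"
    show "A = B"
    proof (rule ccontr)
      assume ne: "A \<noteq> B"
      have "x \<in> A \<or> x \<in> B" using AB ne unfolding f_def by (auto split: if_splits)
      moreover have "\<not> (x \<in> A \<and> x \<in> B)" using dis[OF AB(1,2) ne] by auto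
      ultimately have "Y \<subseteq> A \<or> Y \<subseteq> B" using AB unfolding f_def by (auto split: if_splits)
      then show False using sub[OF AB(1)] sub[OF AB(2)] Y y by blast
    qed
  qed
  have un: "\<Union>(f ` P) = U \<union> Y" using pt A0 unfolding pt_def f_def by (auto split: if_splits)
  have dj: "\<forall>A\<in>f ` P. \<forall>B\<in>f ` P. A \<noteq> B \<longrightarrow> A \<inter> B = {}"
  proof (intro ballI impI)
    fix A' B' assume "A' \<in> f ` P" "B' \<in> f ` P" "A' \<noteq> B'"
    then obtain A B where AB: "A \<in> P" "B \<in> P" "A' = f A" "B' = f B" "A \<noteq> B" by auto
    have "A \<inter> B = {}" using dis AB by auto
    moreover have "\<not> (x \<in> A \<and> x \<in> B)" using dis[OF AB(1,2,5)] by auto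
    ultimately show "A' \<inter> B' = {}" using AB sub[OF AB(1)] sub[OF AB(2)] Y unfolding f_def by auto
  qed
  have pcs: "\<forall>A\<in>f ` P. piece A"
  proof
    fix A' assume "A' \<in> f ` P"
    then obtain A where A: "A \<in> P" "A' = f A" by auto
    show "piece A'"
    proof (cases "x \<in> A")
      case True
      then have "connected_set (A \<union> Y)"
        using conn_union[of A Y x y] pc[OF A(1)] Y y by (auto simp: piece_def)
      then show ?thesis using A True unfolding f_def piece_def by auto
    next
      case False then show ?thesis using A pc unfolding f_def by auto
    qed
  qed
  have "finite (f ` P)" using pt unfolding pt_def by auto
  then show ?thesis using un dj pcs card_image[OF inj] unfolding pt_def join_def f_def[symmetric] by auto
qed

lemma rem_insert: "Y \<subseteq> {2*n, 2*n+1} \<Longrightarrow> rem n (insert Y P) = rem n P"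
  unfolding rem_def by auto

lemma rem_join: "Y \<subseteq> {2*n, 2*n+1} \<Longrightarrow> rem n (join P x Y) = rem n P"
proof -
  assume Y: "Y \<subseteq> {2*n, 2*n+1}"
  have "(\<lambda>A. A - {2*n, 2*n+1}) ` join P x Y = (\<lambda>A. A - {2*n, 2*n+1}) ` P"
    unfolding join_def image_image using Y by (intro image_cong) auto
  then show ?thesis unfolding rem_def by simp
qed

lemma rem_id: "pt (board n) Q \<Longrightarrow> rem n Q = Q"
proof -
  assume pt: "pt (board n) Q"
  have "\<And>A. A \<in> Q \<Longrightarrow> A \<subseteq> {..<2*n}" using pt unfolding pt_def board_def by blast
  then have "\<And>A. A \<in> Q \<Longrightarrow> A - {2*n, 2*n+1} = A" by fastforce
  then have "(\<lambda>A. A - {2*n, 2*n+1}) ` Q = Q" by simp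
  moreover have "{} \<notin> Q" using pt unfolding pt_def piece_def by auto
  ultimately show ?thesis unfolding rem_def by simp
qed

lemma rem_image:
  assumes "\<And>A. A \<in> P \<Longrightarrow> \<not> A \<subseteq> {2*n, 2*n+1} \<Longrightarrow> F (A - {2*n, 2*n+1}) = A"
  shows "F ` rem n P = {A \<in> P. \<not> A \<subseteq> {2*n, 2*n+1}}"
proof -
  have "rem n P = (\<lambda>A. A - {2*n, 2*n+1}) ` {A \<in> P. \<not> A \<subseteq> {2*n, 2*n+1}}"
    unfolding rem_def by auto
  then show ?thesis using assms by (simp add: image_image)
qed

lemma rem_pt:
  assumes n1: "n \<ge> 1" and pt: "pt (board (Suc n)) P"
  shows "pt (board n) (rem n P)"
proof -
  have sub: "\<And>A. A \<in> P \<Longrightarrow> A \<subseteq> board (Suc n)" using pt unfolding pt_def by auto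
  have "\<Union>(rem n P) = \<Union>P - {2*n, 2*n+1}" unfolding rem_def by blast
  also have "\<dots> = board n" using pt unfolding pt_def board_def by auto
  finally have un: "\<Union>(rem n P) = board n" .
  have dj: "\<forall>A\<in>rem n P. \<forall>B\<in>rem n P. A \<noteq> B \<longrightarrow> A \<inter> B = {}"
    using pt unfolding pt_def rem_def by blast
  have pc: "\<forall>A\<in>rem n P. piece A"
    using pt conn_remove[OF n1 sub] unfolding pt_def rem_def piece_def by auto
  have "finite (rem n P)" using pt unfolding pt_def rem_def by auto
  then show ?thesis using un dj pc unfolding pt_def by auto
qed

lemma pt_in: "pt U P \<Longrightarrow> x \<in> U \<Longrightarrow> \<exists>A\<in>P. x \<in> A"
  unfolding pt_def by auto
lemma pt_uniq: "pt U P \<Longrightarrow> A \<in> P \<Longrightarrow> B \<in> P \<Longrightarrow> x \<in> A \<Longrightarrow> x \<in> B \<Longrightarrow> A = B"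
  unfolding pt_def by blast

lemma nb_a:
  assumes n1: "n \<ge> 1" and pt: "pt (board (Suc n)) P" and A: "A \<in> P" "2*n \<in> A" "2*n+1 \<notin> A" "A \<noteq> {2*n}"
  shows "2*n-2 \<in> A"
proof -
  obtain y where y: "y \<in> A" "y \<noteq> 2*n" using A by auto
  have c: "connected_set A" "A \<subseteq> board (Suc n)" using pt A unfolding pt_def piece_def by auto
  obtain u w where uw: "u \<in> A \<inter> {2*n}" "w \<in> A - {2*n}" "adjacent u w"
    using boundary[OF c(1) A(2) _ y(1), of "{2*n}"] y by auto
  have "w < 2*n+2" using uw c(2) by (auto simp: board_def)
  then show ?thesis using adj_a[OF n1, of w] uw A by auto
qed

lemma nb_b:
  assumes n1: "n \<ge> 1" and pt: "pt (board (Suc n)) P" and A: "A \<in> P" "2*n+1 \<in> A" "2*n \<notin> A" "A \<noteq> {2*n+1}"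
  shows "2*n-1 \<in> A"
proof -
  obtain y where y: "y \<in> A" "y \<noteq> 2*n+1" using A by auto
  have c: "connected_set A" "A \<subseteq> board (Suc n)" using pt A unfolding pt_def piece_def by auto
  obtain u w where uw: "u \<in> A \<inter> {2*n+1}" "w \<in> A - {2*n+1}" "adjacent u w"
    using boundary[OF c(1) A(2) _ y(1), of "{2*n+1}"] y by auto
  have "w < 2*n+2" using uw c(2) by (auto simp: board_def)
  then show ?thesis using adj_b[OF n1, of w] uw A by auto
qed

lemma nb_ab:
  assumes n1: "n \<ge> 1" and pt: "pt (board (Suc n)) P" and A: "A \<in> P" "2*n \<in> A" "2*n+1 \<in> A" "A \<noteq> {2*n, 2*n+1}"
  shows "2*n-2 \<in> A \<or> 2*n-1 \<in> A"
proof -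
  obtain y where y: "y \<in> A" "y \<notin> {2*n, 2*n+1}" using A by auto
  have c: "connected_set A" "A \<subseteq> board (Suc n)" using pt A unfolding pt_def piece_def by auto
  obtain u w where uw: "u \<in> A \<inter> {2*n, 2*n+1}" "w \<in> A - {2*n, 2*n+1}" "adjacent u w"
    using boundary[OF c(1) A(2) _ y(1), of "{2*n, 2*n+1}"] y by auto
  have "w < 2*n+2" using uw c(2) by (auto simp: board_def)
  then show ?thesis using adj_a[OF n1, of w] adj_b[OF n1, of w] uw by auto
qed


definition "e1 n Q = insert {2*n} (insert {2*n+1} Q)"
definition "e2 n Q = insert {2*n, 2*n+1} Q"
definition "e3 n Q = insert {2*n} (join Q (2*n-1) {2*n+1})"
definition "e4 n Q = insert {2*n+1} (join Q (2*n-2) {2*n})"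
definition "e5 n Q = join (join Q (2*n-2) {2*n}) (2*n-1) {2*n+1}"
definition "e6 n Q = join Q (2*n-2) {2*n, 2*n+1}"
definition "e7 n Q = join Q (2*n-1) {2*n, 2*n+1}"

definition "cl1 n P \<longleftrightarrow> {2*n} \<in> P \<and> {2*n+1} \<in> P"
definition "cl2 n P \<longleftrightarrow> {2*n, 2*n+1} \<in> P"
definition "cl3 n P \<longleftrightarrow> {2*n} \<in> P \<and> {2*n+1} \<notin> P"
definition "cl4 n P \<longleftrightarrow> {2*n} \<notin> P \<and> {2*n+1} \<in> P"
definition "cl5 n P \<longleftrightarrow> {2*n} \<notin> P \<and> {2*n+1} \<notin> P \<and> (\<forall>A\<in>P. 2*n \<in> A \<longrightarrow> 2*n+1 \<notin> A)"
definition "cl6 n P \<longleftrightarrow> (\<exists>A\<in>P. 2*n \<in> A \<and> 2*n+1 \<in> A \<and> 2*n-2 \<in> A)"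
definition "cl7 n P \<longleftrightarrow> (\<exists>A\<in>P. 2*n \<in> A \<and> 2*n+1 \<in> A \<and> 2*n-1 \<in> A \<and> 2*n-2 \<notin> A)"

definition "sep n Q \<longleftrightarrow> (\<forall>A\<in>Q. \<not> (2*n-2 \<in> A \<and> 2*n-1 \<in> A))"

lemma join_mem: "X \<in> join Q x Y \<longleftrightarrow> (\<exists>A\<in>Q. X = (if x \<in> A then A \<union> Y else A))"
  unfolding join_def image_iff by (rule refl)

lemma count_gen:
  assumes Ept: "\<And>Q. pt (board n) Q \<Longrightarrow> pt (board (Suc n)) (e Q) \<and> card (e Q) = card Q + c"
  and Ecl: "\<And>Q. pt (board n) Q \<Longrightarrow> X Q \<Longrightarrow> cl (e Q)"
  and R: "\<And>P. pt (board (Suc n)) P \<Longrightarrow> cl P \<Longrightarrow> e (rem n P) = P"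
  and Xr: "\<And>P. pt (board (Suc n)) P \<Longrightarrow> cl P \<Longrightarrow> X (rem n P)"
  and Re: "\<And>Q. pt (board n) Q \<Longrightarrow> rem n (e Q) = Q"
  and rp: "\<And>P. pt (board (Suc n)) P \<Longrightarrow> pt (board n) (rem n P)"
  and ck: "c \<le> k"
  shows "card {P. division (Suc n) k P \<and> cl P} = card {Q. division n (k-c) Q \<and> X Q}"
proof (rule bij_betw_same_card, rule bij_betw_byWitness[where f'=e])
  show "\<forall>P\<in>{P. division (Suc n) k P \<and> cl P}. e (rem n P) = P"
    using R by (auto simp: division_pt)
  show "\<forall>Q\<in>{Q. division n (k-c) Q \<and> X Q}. rem n (e Q) = Q"
    using Re by (auto simp: division_pt)
  show "rem n ` {P. division (Suc n) k P \<and> cl P} \<subseteq> {Q. division n (k-c) Q \<and> X Q}"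
  proof
    fix Q assume "Q \<in> rem n ` {P. division (Suc n) k P \<and> cl P}"
    then obtain P where P: "pt (board (Suc n)) P" "card P = k" "cl P" "Q = rem n P"
      by (auto simp: division_pt)
    have "card (e Q) = card Q + c" using Ept rp P by blast
    moreover have "e Q = P" using R P by blast
    ultimately show "Q \<in> {Q. division n (k-c) Q \<and> X Q}"
      using P rp Xr by (auto simp: division_pt)
  qed
  show "e ` {Q. division n (k-c) Q \<and> X Q} \<subseteq> {P. division (Suc n) k P \<and> cl P}"
    using Ept Ecl ck by (auto simp: division_pt)
qed

context fixes n :: nat assumes n1: "n \<ge> 1" begin

lemma dist: "2*n-2 \<noteq> 2*n" "2*n-2 \<noteq> 2*n+1" "2*n-1 \<noteq> 2*n" "2*n-1 \<noteq> 2*n+1"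
   "2*n-2 \<noteq> 2*n-1" "2*n-2 < 2*n" "2*n-1 < 2*n"
  using n1 by arith+

lemma bdinfo: "2*n-2 \<in> board n" "2*n-1 \<in> board n" "2*n \<notin> board n" "2*n+1 \<notin> board n"
  unfolding board_def using n1 by simp_all

lemma ptQ: "pt (board n) Q \<Longrightarrow> A \<in> Q \<Longrightarrow> A \<subseteq> board n \<and> A \<noteq> {}"
  unfolding pt_def piece_def by auto

lemma pairp: "piece {2*n, 2*n+1}" "piece {2*n, Suc (2*n)}" using piece_pair[OF adj_facts(4)[of n]] by simp_all

lemma adjs: "adjacent (2*n-2) (2*n-1)" "adjacent (2*n-2) (2*n)" "adjacent (2*n-1) (2*n+1)" "adjacent (2*n) (2*n+1)"
  "adjacent (2*n-Suc 0) (Suc (2*n))" "adjacent (2*n) (Suc (2*n))" "adjacent (2*n-2) (2*n-Suc 0)"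
  "2*n-2 < 2*n" "2*n-Suc 0 < 2*n" "2*n-1 < 2*n"
  using adj_facts(1)[OF n1] adj_facts(2)[OF n1] adj_facts(3)[OF n1] adj_facts(4)[of n] n1
  by simp_all

lemma bd0: "board (Suc n) = board n \<union> {2*n, 2*n+1}"
  unfolding board_def by (rule set_eqI) (simp, arith)

lemma bd1: "board n \<union> {2*n+1} \<union> {2*n} = board (Suc n)"
  "board n \<union> {2*n} \<union> {2*n+1} = board (Suc n)"
  "board n \<union> {2*n, 2*n+1} = board (Suc n)"
  unfolding bd0 by auto

lemma Ept1: "pt (board n) Q \<Longrightarrow> pt (board (Suc n)) (e1 n Q) \<and> card (e1 n Q) = card Q + 2"
proof -
  assume Q: "pt (board n) Q"
  have 1: "pt (board n \<union> {2*n+1}) (insert {2*n+1} Q) \<and> card (insert {2*n+1} Q) = Suc (card Q)"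
    by (rule pt_insert[OF Q]) (auto simp: board_def piece_single)
  have 2: "pt (board n \<union> {2*n+1} \<union> {2*n}) (e1 n Q) \<and> card (e1 n Q) = Suc (card (insert {2*n+1} Q))"
    unfolding e1_def by (rule pt_insert[OF 1[THEN conjunct1]]) (auto simp: board_def piece_single)
  show ?thesis using 1 2 bd1 by simp
qed

lemma Ept2: "pt (board n) Q \<Longrightarrow> pt (board (Suc n)) (e2 n Q) \<and> card (e2 n Q) = card Q + 1"
proof -
  assume Q: "pt (board n) Q"
  have 1: "pt (board n \<union> {2*n,2*n+1}) (e2 n Q) \<and> card (e2 n Q) = Suc (card Q)"
    unfolding e2_def by (rule pt_insert[OF Q]) (auto simp: board_def pairp)
  show ?thesis using 1 bd1 by simp
qed

lemma Ept3: "pt (board n) Q \<Longrightarrow> pt (board (Suc n)) (e3 n Q) \<and> card (e3 n Q) = card Q + 1"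
proof -
  assume Q: "pt (board n) Q"
  have 1: "pt (board n \<union> {2*n+1}) (join Q (2*n-1) {2*n+1}) \<and> card (join Q (2*n-1) {2*n+1}) = card Q"
    by (rule pt_join[OF Q, of _ _ "2*n+1"]) (auto simp: board_def piece_single adjs bdinfo)
  have 2: "pt (board n \<union> {2*n+1} \<union> {2*n}) (e3 n Q) \<and> card (e3 n Q) = Suc (card (join Q (2*n-1) {2*n+1}))"
    unfolding e3_def by (rule pt_insert[OF 1[THEN conjunct1]]) (auto simp: board_def piece_single)
  show ?thesis using 1 2 bd1 by simp
qed

lemma Ept4: "pt (board n) Q \<Longrightarrow> pt (board (Suc n)) (e4 n Q) \<and> card (e4 n Q) = card Q + 1"
proof -
  assume Q: "pt (board n) Q"
  have 1: "pt (board n \<union> {2*n}) (join Q (2*n-2) {2*n}) \<and> card (join Q (2*n-2) {2*n}) = card Q"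
    by (rule pt_join[OF Q, of _ _ "2*n"]) (auto simp: board_def piece_single adjs bdinfo)
  have 2: "pt (board n \<union> {2*n} \<union> {2*n+1}) (e4 n Q) \<and> card (e4 n Q) = Suc (card (join Q (2*n-2) {2*n}))"
    unfolding e4_def by (rule pt_insert[OF 1[THEN conjunct1]]) (auto simp: board_def piece_single)
  show ?thesis using 1 2 bd1 by simp
qed

lemma Ept5: "pt (board n) Q \<Longrightarrow> pt (board (Suc n)) (e5 n Q) \<and> card (e5 n Q) = card Q"
proof -
  assume Q: "pt (board n) Q"
  have 1: "pt (board n \<union> {2*n}) (join Q (2*n-2) {2*n}) \<and> card (join Q (2*n-2) {2*n}) = card Q"
    by (rule pt_join[OF Q, of _ _ "2*n"]) (auto simp: board_def piece_single adjs bdinfo)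
  have 2: "pt (board n \<union> {2*n} \<union> {2*n+1}) (e5 n Q) \<and> card (e5 n Q) = card (join Q (2*n-2) {2*n})"
    unfolding e5_def by (rule pt_join[OF 1[THEN conjunct1], of _ _ "2*n+1"]) (auto simp: board_def piece_single adjs bdinfo)
  show ?thesis using 1 2 bd1 by simp
qed

lemma Ept6: "pt (board n) Q \<Longrightarrow> pt (board (Suc n)) (e6 n Q) \<and> card (e6 n Q) = card Q"
proof -
  assume Q: "pt (board n) Q"
  have 1: "pt (board n \<union> {2*n,2*n+1}) (e6 n Q) \<and> card (e6 n Q) = card Q"
    unfolding e6_def by (rule pt_join[OF Q, of _ _ "2*n"]) (auto simp: board_def pairp adjs bdinfo)
  show ?thesis using 1 bd1 by simp
qed

lemma Ept7: "pt (board n) Q \<Longrightarrow> pt (board (Suc n)) (e7 n Q) \<and> card (e7 n Q) = card Q"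
proof -
  assume Q: "pt (board n) Q"
  have 1: "pt (board n \<union> {2*n,2*n+1}) (e7 n Q) \<and> card (e7 n Q) = card Q"
    unfolding e7_def by (rule pt_join[OF Q bdinfo(2) _ pairp(1) _ adjs(3)]) (auto simp: board_def)
  show ?thesis using 1 bd1 by simp
qed

end

context fixes n :: nat assumes n1: "n \<ge> 1" begin

lemma e5_img: "e5 n Q = (\<lambda>A. (if 2*n-2 \<in> A then A \<union> {2*n} else A) \<union> (if 2*n-1 \<in> A then {2*n+1} else {})) ` Q"
  unfolding e5_def join_def image_image using n1 by (intro image_cong) auto

lemma Ecl3: "pt (board n) Q \<Longrightarrow> cl3 n (e3 n Q)"
proof -
  assume Q: "pt (board n) Q"
  have h: "\<And>A. A \<in> Q \<Longrightarrow> A \<subseteq> board n \<and> A \<noteq> {}" using ptQ[OF n1 Q] by blast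
  have nb: "2*n+1 \<notin> board n" using bdinfo[OF n1] by blast
  have "{2*n+1} \<notin> join Q (2*n-1) {2*n+1}"
  proof
    assume "{2*n+1} \<in> join Q (2*n-1) {2*n+1}"
    then obtain A where A: "A \<in> Q" and eq: "{2*n+1} = (if 2*n-1 \<in> A then A \<union> {2*n+1} else A)"
      unfolding join_mem by (rule bexE)
    have "A \<subseteq> {2*n+1}" using eq by (cases "2*n-1 \<in> A") simp_all
    then show False using h[OF A] nb by blast
  qed
  moreover have "{2*n+1} \<noteq> {2*n}" by simp
  ultimately show ?thesis unfolding cl3_def e3_def by blast
qed

lemma Ecl4: "pt (board n) Q \<Longrightarrow> cl4 n (e4 n Q)"
proof -
  assume Q: "pt (board n) Q"
  have h: "\<And>A. A \<in> Q \<Longrightarrow> A \<subseteq> board n \<and> A \<noteq> {}" using ptQ[OF n1 Q] by blast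
  have nb: "2*n \<notin> board n" using bdinfo[OF n1] by blast
  have "{2*n} \<notin> join Q (2*n-2) {2*n}"
  proof
    assume "{2*n} \<in> join Q (2*n-2) {2*n}"
    then obtain A where A: "A \<in> Q" and eq: "{2*n} = (if 2*n-2 \<in> A then A \<union> {2*n} else A)"
      unfolding join_mem by (rule bexE)
    have "A \<subseteq> {2*n}" using eq by (cases "2*n-2 \<in> A") simp_all
    then show False using h[OF A] nb by blast
  qed
  moreover have "{2*n} \<noteq> {2*n+1}" by simp
  ultimately show ?thesis unfolding cl4_def e4_def by blast
qed

lemma Ecl5: "pt (board n) Q \<Longrightarrow> sep n Q \<Longrightarrow> cl5 n (e5 n Q)"
proof -
  assume Q: "pt (board n) Q" and sp: "sep n Q"
  have h: "\<And>A. A \<in> Q \<Longrightarrow> A \<subseteq> board n \<and> A \<noteq> {}" using ptQ[OF n1 Q] by blast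
  have bi: "2*n \<notin> board n" "2*n+1 \<notin> board n" using bdinfo[OF n1] by auto
  define g where "g = (\<lambda>A. (if 2*n-2 \<in> A then A \<union> {2*n} else A) \<union> (if 2*n-1 \<in> A then {2*n+1} else {}))"
  have e: "e5 n Q = g ` Q" unfolding e5_img g_def ..
  have 1: "\<And>A. A \<in> Q \<Longrightarrow> g A \<noteq> {2*n} \<and> g A \<noteq> {2*n+1}"
  proof -
    fix A assume A: "A \<in> Q"
    obtain x where x: "x \<in> A" using h[OF A] by blast
    have "A \<subseteq> g A" unfolding g_def by auto
    then have "x \<in> g A" "x \<noteq> 2*n" "x \<noteq> 2*n+1" using x h[OF A] bi by blast+
    then show "g A \<noteq> {2*n} \<and> g A \<noteq> {2*n+1}" by blast
  qed
  have 2: "\<And>A. A \<in> Q \<Longrightarrow> 2*n \<in> g A \<Longrightarrow> 2*n+1 \<notin> g A"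
  proof -
    fix A assume A: "A \<in> Q" "2*n \<in> g A"
    have nA: "2*n \<notin> A" "2*n+1 \<notin> A" using h[OF A(1)] bi by blast+
    have "2*n-2 \<in> A"
    proof (rule ccontr)
      assume "2*n-2 \<notin> A"
      then have "g A = A \<union> (if 2*n-1 \<in> A then {2*n+1} else {})" unfolding g_def by simp
      then show False using A(2) nA by (cases "2*n-1 \<in> A") simp_all
    qed
    then have "2*n-1 \<notin> A" using sp A(1) unfolding sep_def by blast
    then have "g A = A \<union> {2*n}" using \<open>2*n-2 \<in> A\<close> unfolding g_def by simp
    then show "2*n+1 \<notin> g A" using nA by simp
  qed
  show ?thesis unfolding cl5_def e using 1 2 by blast
qed

lemma Ecl6: "pt (board n) Q \<Longrightarrow> cl6 n (e6 n Q)"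
proof -
  assume Q: "pt (board n) Q"
  obtain A where A: "A \<in> Q" "2*n-2 \<in> A" using pt_in[OF Q bdinfo(1)[OF n1]] by (rule bexE)
  have eq: "A \<union> {2*n, 2*n+1} = (if 2*n-2 \<in> A then A \<union> {2*n, 2*n+1} else A)" using A(2) by (rule if_P[symmetric])
  have mem: "A \<union> {2*n, 2*n+1} \<in> e6 n Q" unfolding e6_def join_mem using eq A(1) by (rule bexI)
  have "2*n \<in> A \<union> {2*n, 2*n+1} \<and> 2*n+1 \<in> A \<union> {2*n, 2*n+1} \<and> 2*n-2 \<in> A \<union> {2*n, 2*n+1}"
    using A(2) by blast
  then show ?thesis unfolding cl6_def using mem by (rule bexI)
qed

lemma Ecl7: "pt (board n) Q \<Longrightarrow> sep n Q \<Longrightarrow> cl7 n (e7 n Q)"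
proof -
  assume Q: "pt (board n) Q" and sp: "sep n Q"
  obtain A where A: "A \<in> Q" "2*n-1 \<in> A" using pt_in[OF Q bdinfo(2)[OF n1]] by (rule bexE)
  have eq: "A \<union> {2*n, 2*n+1} = (if 2*n-1 \<in> A then A \<union> {2*n, 2*n+1} else A)" using A(2) by (rule if_P[symmetric])
  have mem: "A \<union> {2*n, 2*n+1} \<in> e7 n Q" unfolding e7_def join_mem using eq A(1) by (rule bexI)
  have p: "2*n-2 \<notin> A" using sp A unfolding sep_def by blast
  have "2*n-2 \<noteq> 2*n" "2*n-2 \<noteq> 2*n+1" using n1 by arith+
  then have "2*n \<in> A \<union> {2*n, 2*n+1} \<and> 2*n+1 \<in> A \<union> {2*n, 2*n+1} \<and> 2*n-1 \<in> A \<union> {2*n, 2*n+1} \<and> 2*n-2 \<notin> A \<union> {2*n, 2*n+1}"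
    using A(2) p by blast
  then show ?thesis unfolding cl7_def using mem by (rule bexI)
qed
end

context fixes n :: nat assumes n1: "n \<ge> 1" begin

lemma ds: "2*n-2 \<noteq> 2*n" "2*n-2 \<noteq> 2*n+1" "2*n-1 \<noteq> 2*n" "2*n-1 \<noteq> 2*n+1" "2*n-2 \<noteq> 2*n-1"
  "2*n \<noteq> 2*n+1"
  using n1 by arith+

lemma bS: "2*n \<in> board (Suc n)" "2*n+1 \<in> board (Suc n)"
  unfolding board_def by simp_all

lemma Pf: "pt (board (Suc n)) P \<Longrightarrow> A \<in> P \<Longrightarrow> A \<noteq> {} \<and> A \<subseteq> board (Suc n)"
  unfolding pt_def piece_def by blast

lemma R_gen:
  assumes "\<And>A. A \<in> P \<Longrightarrow> \<not> A \<subseteq> {2*n, 2*n+1} \<Longrightarrow> F (A - {2*n, 2*n+1}) = A"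
    and "{A \<in> P. A \<subseteq> {2*n, 2*n+1}} = S"
  shows "F ` rem n P \<union> S = P"
  using rem_image[of P n F, OF assms(1)] assms(2) by blast

lemma R1: assumes pt: "pt (board (Suc n)) P" and c: "cl1 n P" shows "e1 n (rem n P) = P"
proof -
  have a: "{2*n} \<in> P" and b: "{2*n+1} \<in> P" using c unfolding cl1_def by blast+
  have "id ` rem n P \<union> {{2*n}, {2*n+1}} = P"
  proof (rule R_gen)
    fix A assume A: "A \<in> P" "\<not> A \<subseteq> {2*n, 2*n+1}"
    have "2*n \<notin> A" using pt_uniq[OF pt A(1) a, of "2*n"] A(2) by blast
    moreover have "2*n+1 \<notin> A" using pt_uniq[OF pt A(1) b, of "2*n+1"] A(2) by blast
    ultimately show "id (A - {2*n, 2*n+1}) = A" by simp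
  next
    show "{A \<in> P. A \<subseteq> {2*n, 2*n+1}} = {{2*n}, {2*n+1}}"
    proof (intro equalityI subsetI)
      fix A assume A: "A \<in> {A \<in> P. A \<subseteq> {2*n, 2*n+1}}"
      then have A1: "A \<in> P" "A \<subseteq> {2*n, 2*n+1}" "A \<noteq> {}" using Pf[OF pt] by blast+
      show "A \<in> {{2*n}, {2*n+1}}"
      proof (cases "2*n \<in> A")
        case True then show ?thesis using pt_uniq[OF pt A1(1) a] by blast
      next
        case False then have "2*n+1 \<in> A" using A1 by blast
        then show ?thesis using pt_uniq[OF pt A1(1) b] by blast
      qed
    next
      fix A assume "A \<in> {{2*n}, {2*n+1}}"
      then show "A \<in> {A \<in> P. A \<subseteq> {2*n, 2*n+1}}" using a b by blast
    qed
  qed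
  then show ?thesis unfolding e1_def by simp
qed

lemma R2: assumes pt: "pt (board (Suc n)) P" and c: "cl2 n P" shows "e2 n (rem n P) = P"
proof -
  have a: "{2*n, 2*n+1} \<in> P" using c unfolding cl2_def by blast
  have "id ` rem n P \<union> {{2*n, 2*n+1}} = P"
  proof (rule R_gen)
    fix A assume A: "A \<in> P" "\<not> A \<subseteq> {2*n, 2*n+1}"
    have "2*n \<notin> A" using pt_uniq[OF pt A(1) a, of "2*n"] A(2) by blast
    moreover have "2*n+1 \<notin> A" using pt_uniq[OF pt A(1) a, of "2*n+1"] A(2) by blast
    ultimately show "id (A - {2*n, 2*n+1}) = A" by simp
  next
    show "{A \<in> P. A \<subseteq> {2*n, 2*n+1}} = {{2*n, 2*n+1}}"
    proof (intro equalityI subsetI)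
      fix A assume A: "A \<in> {A \<in> P. A \<subseteq> {2*n, 2*n+1}}"
      then have A1: "A \<in> P" "A \<subseteq> {2*n, 2*n+1}" "A \<noteq> {}" using Pf[OF pt] by blast+
      then obtain x where "x \<in> A" "x \<in> {2*n, 2*n+1}" by blast
      then show "A \<in> {{2*n, 2*n+1}}" using pt_uniq[OF pt A1(1) a] by blast
    next
      fix A assume "A \<in> {{2*n, 2*n+1}}"
      then show "A \<in> {A \<in> P. A \<subseteq> {2*n, 2*n+1}}" using a by blast
    qed
  qed
  then show ?thesis unfolding e2_def by simp
qed


lemma R3: assumes pt: "pt (board (Suc n)) P" and c: "cl3 n P" shows "e3 n (rem n P) = P"
proof -
  have a: "{2*n} \<in> P" and nb: "{2*n+1} \<notin> P" using c unfolding cl3_def by blast+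
  obtain Ab where Ab: "Ab \<in> P" "2*n+1 \<in> Ab" using pt_in[OF pt bS(2)] by (rule bexE)
  have aAb: "2*n \<notin> Ab"
  proof
    assume "2*n \<in> Ab" then have "Ab = {2*n}" using pt_uniq[OF pt Ab(1) a] by blast
    then show False using Ab(2) ds(6) by simp
  qed
  have "Ab \<noteq> {2*n+1}" using Ab(1) nb by blast
  then have qAb: "2*n-1 \<in> Ab" using nb_b[OF n1 pt Ab aAb] by blast
  define F where "F = (\<lambda>B. if 2*n-1 \<in> B then B \<union> {2*n+1} else B)"
  have "F ` rem n P \<union> {{2*n}} = P"
  proof (rule R_gen)
    fix A assume A: "A \<in> P" "\<not> A \<subseteq> {2*n, 2*n+1}"
    have naA: "2*n \<notin> A" using pt_uniq[OF pt A(1) a, of "2*n"] A(2) by blast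
    show "F (A - {2*n, 2*n+1}) = A"
    proof (cases "A = Ab")
      case True
      have "2*n-1 \<in> A - {2*n, 2*n+1}" using qAb True ds by blast
      then have "F (A - {2*n, 2*n+1}) = (A - {2*n, 2*n+1}) \<union> {2*n+1}" unfolding F_def by (rule if_P)
      then show ?thesis using True Ab(2) naA by blast
    next
      case False
      have "2*n+1 \<notin> A" using pt_uniq[OF pt A(1) Ab(1), of "2*n+1"] Ab(2) False by blast
      moreover have "2*n-1 \<notin> A" using pt_uniq[OF pt A(1) Ab(1), of "2*n-1"] qAb False by blast
      ultimately show ?thesis using naA unfolding F_def by simp
    qed
  next
    show "{A \<in> P. A \<subseteq> {2*n, 2*n+1}} = {{2*n}}"
    proof (intro equalityI subsetI)
      fix A assume A: "A \<in> {A \<in> P. A \<subseteq> {2*n, 2*n+1}}"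
      then have A1: "A \<in> P" "A \<subseteq> {2*n, 2*n+1}" "A \<noteq> {}" using Pf[OF pt] by blast+
      show "A \<in> {{2*n}}"
      proof (cases "2*n \<in> A")
        case True then show ?thesis using pt_uniq[OF pt A1(1) a] by blast
      next
        case False then have "A = {2*n+1}" using A1 by blast
        then show ?thesis using A1(1) nb by blast
      qed
    next
      fix A assume "A \<in> {{2*n}}"
      then show "A \<in> {A \<in> P. A \<subseteq> {2*n, 2*n+1}}" using a by blast
    qed
  qed
  then show ?thesis unfolding e3_def join_def F_def by blast
qed

lemma R4: assumes pt: "pt (board (Suc n)) P" and c: "cl4 n P" shows "e4 n (rem n P) = P"
proof -
  have b: "{2*n+1} \<in> P" and na: "{2*n} \<notin> P" using c unfolding cl4_def by blast+
  obtain Aa where Aa: "Aa \<in> P" "2*n \<in> Aa" using pt_in[OF pt bS(1)] by (rule bexE)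
  have bAa: "2*n+1 \<notin> Aa"
  proof
    assume "2*n+1 \<in> Aa" then have "Aa = {2*n+1}" using pt_uniq[OF pt Aa(1) b] by blast
    then show False using Aa(2) ds(6) by simp
  qed
  have "Aa \<noteq> {2*n}" using Aa(1) na by blast
  then have pAa: "2*n-2 \<in> Aa" using nb_a[OF n1 pt Aa bAa] by blast
  define F where "F = (\<lambda>B. if 2*n-2 \<in> B then B \<union> {2*n} else B)"
  have "F ` rem n P \<union> {{2*n+1}} = P"
  proof (rule R_gen)
    fix A assume A: "A \<in> P" "\<not> A \<subseteq> {2*n, 2*n+1}"
    have nbA: "2*n+1 \<notin> A" using pt_uniq[OF pt A(1) b, of "2*n+1"] A(2) by blast
    show "F (A - {2*n, 2*n+1}) = A"
    proof (cases "A = Aa")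
      case True
      have "2*n-2 \<in> A - {2*n, 2*n+1}" using pAa True ds by blast
      then have "F (A - {2*n, 2*n+1}) = (A - {2*n, 2*n+1}) \<union> {2*n}" unfolding F_def by (rule if_P)
      then show ?thesis using True Aa(2) nbA by blast
    next
      case False
      have "2*n \<notin> A" using pt_uniq[OF pt A(1) Aa(1), of "2*n"] Aa(2) False by blast
      moreover have "2*n-2 \<notin> A" using pt_uniq[OF pt A(1) Aa(1), of "2*n-2"] pAa False by blast
      ultimately show ?thesis using nbA unfolding F_def by simp
    qed
  next
    show "{A \<in> P. A \<subseteq> {2*n, 2*n+1}} = {{2*n+1}}"
    proof (intro equalityI subsetI)
      fix A assume A: "A \<in> {A \<in> P. A \<subseteq> {2*n, 2*n+1}}"
      then have A1: "A \<in> P" "A \<subseteq> {2*n, 2*n+1}" "A \<noteq> {}" using Pf[OF pt] by blast+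
      show "A \<in> {{2*n+1}}"
      proof (cases "2*n+1 \<in> A")
        case True then show ?thesis using pt_uniq[OF pt A1(1) b] by blast
      next
        case False then have "A = {2*n}" using A1 by blast
        then show ?thesis using A1(1) na by blast
      qed
    next
      fix A assume "A \<in> {{2*n+1}}"
      then show "A \<in> {A \<in> P. A \<subseteq> {2*n, 2*n+1}}" using b by blast
    qed
  qed
  then show ?thesis unfolding e4_def join_def F_def by blast
qed

lemma rem_mem: "B \<in> rem n P \<Longrightarrow> \<exists>A\<in>P. B = A - {2*n, 2*n+1}"
  unfolding rem_def by blast

lemma R5facts: assumes pt: "pt (board (Suc n)) P" and c: "cl5 n P"
  obtains Aa Ab where "Aa \<in> P" "2*n \<in> Aa" "2*n+1 \<notin> Aa" "2*n-2 \<in> Aa"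
    "Ab \<in> P" "2*n+1 \<in> Ab" "2*n \<notin> Ab" "2*n-1 \<in> Ab" "Aa \<noteq> Ab"
proof -
  have na: "{2*n} \<notin> P" and nb: "{2*n+1} \<notin> P" and ab: "\<forall>A\<in>P. 2*n \<in> A \<longrightarrow> 2*n+1 \<notin> A"
    using c unfolding cl5_def by blast+
  obtain Aa where Aa: "Aa \<in> P" "2*n \<in> Aa" using pt_in[OF pt bS(1)] by (rule bexE)
  obtain Ab where Ab: "Ab \<in> P" "2*n+1 \<in> Ab" using pt_in[OF pt bS(2)] by (rule bexE)
  have bAa: "2*n+1 \<notin> Aa" using ab Aa by blast
  have aAb: "2*n \<notin> Ab" using ab Ab by blast
  have "Aa \<noteq> {2*n}" using Aa(1) na by blast
  then have pAa: "2*n-2 \<in> Aa" using nb_a[OF n1 pt Aa bAa] by blast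
  have "Ab \<noteq> {2*n+1}" using Ab(1) nb by blast
  then have qAb: "2*n-1 \<in> Ab" using nb_b[OF n1 pt Ab aAb] by blast
  have "Aa \<noteq> Ab" using Ab(2) bAa by blast
  then show ?thesis using that Aa bAa pAa Ab aAb qAb by blast
qed

lemma R5: assumes pt: "pt (board (Suc n)) P" and c: "cl5 n P" shows "e5 n (rem n P) = P"
proof -
  obtain Aa Ab where Aa: "Aa \<in> P" "2*n \<in> Aa" "2*n+1 \<notin> Aa" "2*n-2 \<in> Aa"
    and Ab: "Ab \<in> P" "2*n+1 \<in> Ab" "2*n \<notin> Ab" "2*n-1 \<in> Ab" and ne: "Aa \<noteq> Ab"
    using R5facts[OF pt c] by blast
  have qAa: "2*n-1 \<notin> Aa" using pt_uniq[OF pt Aa(1) Ab(1), of "2*n-1"] Ab(4) ne by blast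
  have pAb: "2*n-2 \<notin> Ab" using pt_uniq[OF pt Aa(1) Ab(1), of "2*n-2"] Aa(4) ne by blast
  define g where "g = (\<lambda>A. (if 2*n-2 \<in> A then A \<union> {2*n} else A) \<union> (if 2*n-1 \<in> A then {2*n+1} else {}))"
  have "g ` rem n P \<union> {} = P"
  proof (rule R_gen)
    fix A assume A: "A \<in> P" "\<not> A \<subseteq> {2*n, 2*n+1}"
    show "g (A - {2*n, 2*n+1}) = A"
    proof (cases "A = Aa")
      case True
      have "2*n-2 \<in> A - {2*n, 2*n+1}" "2*n-1 \<notin> A - {2*n, 2*n+1}" using Aa(4) qAa True ds by blast+
      then have "g (A - {2*n, 2*n+1}) = (A - {2*n, 2*n+1}) \<union> {2*n}" unfolding g_def by (simp only: if_True if_False Un_empty_right)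
      then show ?thesis using True Aa(2,3) by blast
    next
      case F1: False
      show ?thesis
      proof (cases "A = Ab")
        case True
        have "2*n-2 \<notin> A - {2*n, 2*n+1}" "2*n-1 \<in> A - {2*n, 2*n+1}" using Ab(4) pAb True ds by blast+
        then have "g (A - {2*n, 2*n+1}) = (A - {2*n, 2*n+1}) \<union> {2*n+1}" unfolding g_def by (simp only: if_True if_False)
        then show ?thesis using True Ab(2,3) by blast
      next
        case False
        have "2*n \<notin> A" "2*n-2 \<notin> A" using pt_uniq[OF pt A(1) Aa(1)] Aa(2,4) F1 by blast+
        moreover have "2*n+1 \<notin> A" "2*n-1 \<notin> A" using pt_uniq[OF pt A(1) Ab(1)] Ab(2,4) False by blast+
        ultimately show ?thesis unfolding g_def by simp
      qed
    qed
  next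
    show "{A \<in> P. A \<subseteq> {2*n, 2*n+1}} = {}"
    proof (intro equalityI subsetI)
      fix A assume A: "A \<in> {A \<in> P. A \<subseteq> {2*n, 2*n+1}}"
      then have A1: "A \<in> P" "A \<subseteq> {2*n, 2*n+1}" "A \<noteq> {}" using Pf[OF pt] by blast+
      show "A \<in> {}"
      proof (cases "2*n \<in> A")
        case True then have "A = Aa" using pt_uniq[OF pt A1(1) Aa(1)] Aa(2) by blast
        then show ?thesis using A1(2) Aa(4) ds by blast
      next
        case False then have "2*n+1 \<in> A" using A1 by blast
        then have "A = Ab" using pt_uniq[OF pt A1(1) Ab(1)] Ab(2) by blast
        then show ?thesis using A1(2) Ab(4) ds by blast
      qed
    qed simp
  qed
  then show ?thesis unfolding e5_img[OF n1] g_def by simp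
qed

lemma Sep5: assumes pt: "pt (board (Suc n)) P" and c: "cl5 n P" shows "sep n (rem n P)"
proof -
  obtain Aa Ab where Aa: "Aa \<in> P" "2*n \<in> Aa" "2*n+1 \<notin> Aa" "2*n-2 \<in> Aa"
    and Ab: "Ab \<in> P" "2*n+1 \<in> Ab" "2*n \<notin> Ab" "2*n-1 \<in> Ab" and ne: "Aa \<noteq> Ab"
    using R5facts[OF pt c] by blast
  show ?thesis unfolding sep_def
  proof (intro ballI notI)
    fix B assume B: "B \<in> rem n P" "2*n-2 \<in> B \<and> 2*n-1 \<in> B"
    obtain A where A: "A \<in> P" "B = A - {2*n, 2*n+1}" using rem_mem[OF B(1)] by (rule bexE)
    have "A = Aa" using pt_uniq[OF pt A(1) Aa(1)] Aa(4) A(2) B(2) by blast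
    moreover have "A = Ab" using pt_uniq[OF pt A(1) Ab(1)] Ab(4) A(2) B(2) by blast
    ultimately show False using ne by simp
  qed
qed

lemma R6: assumes pt: "pt (board (Suc n)) P" and c: "cl6 n P" shows "e6 n (rem n P) = P"
proof -
  obtain A0 where A0: "A0 \<in> P" "2*n \<in> A0" "2*n+1 \<in> A0" "2*n-2 \<in> A0"
    using c unfolding cl6_def by blast
  define F where "F = (\<lambda>B. if 2*n-2 \<in> B then B \<union> {2*n, 2*n+1} else B)"
  have "F ` rem n P \<union> {} = P"
  proof (rule R_gen)
    fix A assume A: "A \<in> P" "\<not> A \<subseteq> {2*n, 2*n+1}"
    show "F (A - {2*n, 2*n+1}) = A"
    proof (cases "A = A0")
      case True
      have "2*n-2 \<in> A - {2*n, 2*n+1}" using A0(4) True ds by blast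
      then have "F (A - {2*n, 2*n+1}) = (A - {2*n, 2*n+1}) \<union> {2*n, 2*n+1}" unfolding F_def by (rule if_P)
      then show ?thesis using True A0(2,3) by blast
    next
      case False
      have "2*n \<notin> A" "2*n+1 \<notin> A" "2*n-2 \<notin> A" using pt_uniq[OF pt A(1) A0(1)] A0(2-4) False by blast+
      then show ?thesis unfolding F_def by simp
    qed
  next
    show "{A \<in> P. A \<subseteq> {2*n, 2*n+1}} = {}"
    proof (intro equalityI subsetI)
      fix A assume A: "A \<in> {A \<in> P. A \<subseteq> {2*n, 2*n+1}}"
      then have A1: "A \<in> P" "A \<subseteq> {2*n, 2*n+1}" "A \<noteq> {}" using Pf[OF pt] by blast+
      then obtain x where "x \<in> A" "x \<in> {2*n, 2*n+1}" by blast
      then have "A = A0" using pt_uniq[OF pt A1(1) A0(1)] A0(2,3) by blast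
      then show "A \<in> {}" using A1(2) A0(4) ds by blast
    qed simp
  qed
  then show ?thesis unfolding e6_def join_def F_def by simp
qed

lemma R7facts: assumes c: "cl7 n P"
  obtains A0 where "A0 \<in> P" "2*n \<in> A0" "2*n+1 \<in> A0" "2*n-1 \<in> A0" "2*n-2 \<notin> A0"
  using c unfolding cl7_def by blast

lemma R7: assumes pt: "pt (board (Suc n)) P" and c: "cl7 n P" shows "e7 n (rem n P) = P"
proof -
  obtain A0 where A0: "A0 \<in> P" "2*n \<in> A0" "2*n+1 \<in> A0" "2*n-1 \<in> A0"
    using R7facts[OF c] by blast
  define F where "F = (\<lambda>B. if 2*n-1 \<in> B then B \<union> {2*n, 2*n+1} else B)"
  have "F ` rem n P \<union> {} = P"
  proof (rule R_gen)
    fix A assume A: "A \<in> P" "\<not> A \<subseteq> {2*n, 2*n+1}"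
    show "F (A - {2*n, 2*n+1}) = A"
    proof (cases "A = A0")
      case True
      have "2*n-1 \<in> A - {2*n, 2*n+1}" using A0(4) True ds by blast
      then have "F (A - {2*n, 2*n+1}) = (A - {2*n, 2*n+1}) \<union> {2*n, 2*n+1}" unfolding F_def by (rule if_P)
      then show ?thesis using True A0(2,3) by blast
    next
      case False
      have "2*n \<notin> A" "2*n+1 \<notin> A" "2*n-1 \<notin> A" using pt_uniq[OF pt A(1) A0(1)] A0(2-4) False by blast+
      then show ?thesis unfolding F_def by simp
    qed
  next
    show "{A \<in> P. A \<subseteq> {2*n, 2*n+1}} = {}"
    proof (intro equalityI subsetI)
      fix A assume A: "A \<in> {A \<in> P. A \<subseteq> {2*n, 2*n+1}}"
      then have A1: "A \<in> P" "A \<subseteq> {2*n, 2*n+1}" "A \<noteq> {}" using Pf[OF pt] by blast+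
      then obtain x where "x \<in> A" "x \<in> {2*n, 2*n+1}" by blast
      then have "A = A0" using pt_uniq[OF pt A1(1) A0(1)] A0(2,3) by blast
      then show "A \<in> {}" using A1(2) A0(4) ds by blast
    qed simp
  qed
  then show ?thesis unfolding e7_def join_def F_def by simp
qed

lemma Sep7: assumes pt: "pt (board (Suc n)) P" and c: "cl7 n P" shows "sep n (rem n P)"
proof -
  obtain A0 where A0: "A0 \<in> P" "2*n \<in> A0" "2*n+1 \<in> A0" "2*n-1 \<in> A0" "2*n-2 \<notin> A0"
    using R7facts[OF c] by blast
  show ?thesis unfolding sep_def
  proof (intro ballI notI)
    fix B assume B: "B \<in> rem n P" "2*n-2 \<in> B \<and> 2*n-1 \<in> B"
    obtain A where A: "A \<in> P" "B = A - {2*n, 2*n+1}" using rem_mem[OF B(1)] by (rule bexE)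
    have "A = A0" using pt_uniq[OF pt A(1) A0(1)] A0(4) A(2) B(2) by blast
    then show False using A0(5) A(2) B(2) by blast
  qed
qed
end

context fixes n :: nat assumes n1: "n \<ge> 1" begin

lemma x13: assumes "cl1 n P" and "cl3 n P" shows False
  using assms unfolding cl1_def cl3_def by blast

lemma x14: assumes "cl1 n P" and "cl4 n P" shows False
  using assms unfolding cl1_def cl4_def by blast

lemma x15: assumes "cl1 n P" and "cl5 n P" shows False
  using assms unfolding cl1_def cl5_def by blast

lemma x34: assumes "cl3 n P" and "cl4 n P" shows False
  using assms unfolding cl3_def cl4_def by blast

lemma x35: assumes "cl3 n P" and "cl5 n P" shows False
  using assms unfolding cl3_def cl5_def by blast

lemma x45: assumes "cl4 n P" and "cl5 n P" shows False
  using assms unfolding cl4_def cl5_def by blast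

lemma x25: assumes "cl2 n P" and "cl5 n P" shows False
  using assms unfolding cl2_def cl5_def by blast

lemma x56: assumes "cl5 n P" and "cl6 n P" shows False
  using assms unfolding cl5_def cl6_def by blast

lemma x57: assumes "cl5 n P" and "cl7 n P" shows False
  using assms unfolding cl5_def cl7_def by blast

lemma sng: "{2*n} \<noteq> {2*n, 2*n+1}" "{2*n+1} \<noteq> {2*n, 2*n+1}" "{2*n} \<noteq> {2*n+1}"
  by auto

lemma x12: assumes pt: "pt (board (Suc n)) P" and "cl1 n P" and "cl2 n P" shows False
proof -
  have a: "{2*n} \<in> P" and ab: "{2*n,2*n+1} \<in> P" using assms unfolding cl1_def cl2_def by blast+
  have "{2*n} = {2*n,2*n+1}" using pt_uniq[OF pt a ab, of "2*n"] by blast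
  then show False using sng by blast
qed
lemma x23: assumes pt: "pt (board (Suc n)) P" and "cl2 n P" and "cl3 n P" shows False
proof -
  have a: "{2*n} \<in> P" and ab: "{2*n,2*n+1} \<in> P" using assms unfolding cl3_def cl2_def by blast+
  have "{2*n} = {2*n,2*n+1}" using pt_uniq[OF pt a ab, of "2*n"] by blast
  then show False using sng by blast
qed
lemma x24: assumes pt: "pt (board (Suc n)) P" and "cl2 n P" and "cl4 n P" shows False
proof -
  have a: "{2*n+1} \<in> P" and ab: "{2*n,2*n+1} \<in> P" using assms unfolding cl4_def cl2_def by blast+
  have "{2*n+1} = {2*n,2*n+1}" using pt_uniq[OF pt a ab, of "2*n+1"] by blast
  then show False using sng by blast
qed
lemma xa: assumes pt: "pt (board (Suc n)) P" and a: "{2*n} \<in> P" and A: "A \<in> P" "2*n \<in> A" "2*n+1 \<in> A"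
  shows False
proof -
  have "A = {2*n}" using pt_uniq[OF pt A(1) a A(2)] by blast
  then show False using A(3) by simp
qed
lemma xb: assumes pt: "pt (board (Suc n)) P" and a: "{2*n+1} \<in> P" and A: "A \<in> P" "2*n \<in> A" "2*n+1 \<in> A"
  shows False
proof -
  have "A = {2*n+1}" using pt_uniq[OF pt A(1) a A(3)] by blast
  then show False using A(2) by simp
qed
lemma xab: assumes pt: "pt (board (Suc n)) P" and a: "{2*n,2*n+1} \<in> P" and A: "A \<in> P" "2*n \<in> A" "x \<in> A"
  and x: "x \<noteq> 2*n" "x \<noteq> 2*n+1"
  shows False
proof -
  have "A = {2*n,2*n+1}" using pt_uniq[OF pt A(1) a A(2)] by blast
  then show False using A(3) x by simp
qed

lemma x16: assumes pt: "pt (board (Suc n)) P" and "cl1 n P" and "cl6 n P" shows False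
proof -
  have a: "{2*n} \<in> P" using assms unfolding cl1_def by blast
  obtain A where "A \<in> P" "2*n \<in> A" "2*n+1 \<in> A" using assms unfolding cl6_def by blast
  then show False using xa[OF pt a] by blast
qed

lemma x17: assumes pt: "pt (board (Suc n)) P" and "cl1 n P" and "cl7 n P" shows False
proof -
  have a: "{2*n} \<in> P" using assms unfolding cl1_def by blast
  obtain A where "A \<in> P" "2*n \<in> A" "2*n+1 \<in> A" using assms unfolding cl7_def by blast
  then show False using xa[OF pt a] by blast
qed

lemma x36: assumes pt: "pt (board (Suc n)) P" and "cl3 n P" and "cl6 n P" shows False
proof -
  have a: "{2*n} \<in> P" using assms unfolding cl3_def by blast
  obtain A where "A \<in> P" "2*n \<in> A" "2*n+1 \<in> A" using assms unfolding cl6_def by blast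
  then show False using xa[OF pt a] by blast
qed

lemma x37: assumes pt: "pt (board (Suc n)) P" and "cl3 n P" and "cl7 n P" shows False
proof -
  have a: "{2*n} \<in> P" using assms unfolding cl3_def by blast
  obtain A where "A \<in> P" "2*n \<in> A" "2*n+1 \<in> A" using assms unfolding cl7_def by blast
  then show False using xa[OF pt a] by blast
qed

lemma x46: assumes pt: "pt (board (Suc n)) P" and "cl4 n P" and "cl6 n P" shows False
proof -
  have a: "{2*n+1} \<in> P" using assms unfolding cl4_def by blast
  obtain A where "A \<in> P" "2*n \<in> A" "2*n+1 \<in> A" using assms unfolding cl6_def by blast
  then show False using xb[OF pt a] by blast
qed

lemma x47: assumes pt: "pt (board (Suc n)) P" and "cl4 n P" and "cl7 n P" shows False
proof -
  have a: "{2*n+1} \<in> P" using assms unfolding cl4_def by blast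
  obtain A where "A \<in> P" "2*n \<in> A" "2*n+1 \<in> A" using assms unfolding cl7_def by blast
  then show False using xb[OF pt a] by blast
qed

lemma x26: assumes pt: "pt (board (Suc n)) P" and "cl2 n P" and "cl6 n P" shows False
proof -
  have a: "{2*n,2*n+1} \<in> P" using assms unfolding cl2_def by blast
  obtain A where "A \<in> P" "2*n \<in> A" "2*n-2 \<in> A" using assms unfolding cl6_def by blast
  then show False using xab[OF pt a, of A "2*n-2"] ds[OF n1] by blast
qed

lemma x27: assumes pt: "pt (board (Suc n)) P" and "cl2 n P" and "cl7 n P" shows False
proof -
  have a: "{2*n,2*n+1} \<in> P" using assms unfolding cl2_def by blast
  obtain A where "A \<in> P" "2*n \<in> A" "2*n-1 \<in> A" using assms unfolding cl7_def by blast
  then show False using xab[OF pt a, of A "2*n-1"] ds[OF n1] by blast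
qed

lemma x67: assumes pt: "pt (board (Suc n)) P" and "cl6 n P" and "cl7 n P" shows False
proof -
  obtain A where A: "A \<in> P" "2*n \<in> A" "2*n-2 \<in> A" using assms unfolding cl6_def by blast
  obtain B where B: "B \<in> P" "2*n \<in> B" "2*n-2 \<notin> B" using assms unfolding cl7_def by blast
  have "A = B" using pt_uniq[OF pt A(1) B(1) A(2) B(2)] .
  then show False using A B by blast
qed

lemma cover: assumes pt: "pt (board (Suc n)) P"
  shows "cl1 n P \<or> cl2 n P \<or> cl3 n P \<or> cl4 n P \<or> cl5 n P \<or> cl6 n P \<or> cl7 n P"
proof (cases "{2*n} \<in> P")
  case True then show ?thesis unfolding cl1_def cl3_def by blast
next
  case na: False
  show ?thesis
  proof (cases "{2*n+1} \<in> P")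
    case True then show ?thesis using na unfolding cl4_def by blast
  next
    case nb: False
    show ?thesis
    proof (cases "\<forall>A\<in>P. 2*n \<in> A \<longrightarrow> 2*n+1 \<notin> A")
      case True then show ?thesis using na nb unfolding cl5_def by blast
    next
      case False
      then obtain A where A: "A \<in> P" "2*n \<in> A" "2*n+1 \<in> A" by blast
      show ?thesis
      proof (cases "A = {2*n, 2*n+1}")
        case True then show ?thesis using A unfolding cl2_def by blast
      next
        case False
        then have "2*n-2 \<in> A \<or> 2*n-1 \<in> A" using nb_ab[OF n1 pt A] by blast
        then show ?thesis using A unfolding cl6_def cl7_def by blast
      qed
    qed
  qed
qed


end

context fixes n :: nat assumes n1: "n \<ge> 1" begin
lemma Re1: "pt (board n) Q \<Longrightarrow> rem n (e1 n Q) = Q"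
  unfolding e1_def by (simp add: rem_insert rem_join rem_id)

lemma Re2: "pt (board n) Q \<Longrightarrow> rem n (e2 n Q) = Q"
  unfolding e2_def by (simp add: rem_insert rem_join rem_id)

lemma Re3: "pt (board n) Q \<Longrightarrow> rem n (e3 n Q) = Q"
  unfolding e3_def by (simp add: rem_insert rem_join rem_id)

lemma Re4: "pt (board n) Q \<Longrightarrow> rem n (e4 n Q) = Q"
  unfolding e4_def by (simp add: rem_insert rem_join rem_id)

lemma Re5: "pt (board n) Q \<Longrightarrow> rem n (e5 n Q) = Q"
  unfolding e5_def by (simp add: rem_insert rem_join rem_id)

lemma Re6: "pt (board n) Q \<Longrightarrow> rem n (e6 n Q) = Q"
  unfolding e6_def by (simp add: rem_insert rem_join rem_id)

lemma Re7: "pt (board n) Q \<Longrightarrow> rem n (e7 n Q) = Q"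
  unfolding e7_def by (simp add: rem_insert rem_join rem_id)

lemma cnt1: "2 \<le> k \<Longrightarrow> card {P. division (Suc n) k P \<and> cl1 n P} = d (k-2) n"
proof -
  assume k: "2 \<le> k"
  have "card {P. division (Suc n) k P \<and> cl1 n P} = card {Q. division n (k-2) Q \<and> True}"
  proof (rule count_gen[where e="e1 n" and c=2 and X="\<lambda>_. True"])
    show "\<And>Q. pt (board n) Q \<Longrightarrow> pt (board (Suc n)) (e1 n Q) \<and> card (e1 n Q) = card Q + 2" by (rule Ept1[OF n1])
    show "\<And>Q. pt (board n) Q \<Longrightarrow> True \<Longrightarrow> cl1 n (e1 n Q)" unfolding cl1_def e1_def by simp
    show "\<And>P. pt (board (Suc n)) P \<Longrightarrow> cl1 n P \<Longrightarrow> e1 n (rem n P) = P" by (rule R1[OF n1])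
    show "\<And>P. pt (board (Suc n)) P \<Longrightarrow> cl1 n P \<Longrightarrow> True" by simp
    show "\<And>Q. pt (board n) Q \<Longrightarrow> rem n (e1 n Q) = Q" by (rule Re1)
    show "\<And>P. pt (board (Suc n)) P \<Longrightarrow> pt (board n) (rem n P)" by (rule rem_pt[OF n1])
  qed (rule k)
  then show ?thesis unfolding d_def by simp
qed

lemma cnt2: "1 \<le> k \<Longrightarrow> card {P. division (Suc n) k P \<and> cl2 n P} = d (k-1) n"
proof -
  assume k: "1 \<le> k"
  have "card {P. division (Suc n) k P \<and> cl2 n P} = card {Q. division n (k-1) Q \<and> True}"
  proof (rule count_gen[where e="e2 n" and c=1 and X="\<lambda>_. True"])
    show "\<And>Q. pt (board n) Q \<Longrightarrow> pt (board (Suc n)) (e2 n Q) \<and> card (e2 n Q) = card Q + 1" by (rule Ept2[OF n1])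
    show "\<And>Q. pt (board n) Q \<Longrightarrow> True \<Longrightarrow> cl2 n (e2 n Q)" unfolding cl2_def e2_def by simp
    show "\<And>P. pt (board (Suc n)) P \<Longrightarrow> cl2 n P \<Longrightarrow> e2 n (rem n P) = P" by (rule R2[OF n1])
    show "\<And>P. pt (board (Suc n)) P \<Longrightarrow> cl2 n P \<Longrightarrow> True" by simp
    show "\<And>Q. pt (board n) Q \<Longrightarrow> rem n (e2 n Q) = Q" by (rule Re2)
    show "\<And>P. pt (board (Suc n)) P \<Longrightarrow> pt (board n) (rem n P)" by (rule rem_pt[OF n1])
  qed (rule k)
  then show ?thesis unfolding d_def by simp
qed

lemma cnt3: "1 \<le> k \<Longrightarrow> card {P. division (Suc n) k P \<and> cl3 n P} = d (k-1) n"
proof -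
  assume k: "1 \<le> k"
  have "card {P. division (Suc n) k P \<and> cl3 n P} = card {Q. division n (k-1) Q \<and> True}"
  proof (rule count_gen[where e="e3 n" and c=1 and X="\<lambda>_. True"])
    show "\<And>Q. pt (board n) Q \<Longrightarrow> pt (board (Suc n)) (e3 n Q) \<and> card (e3 n Q) = card Q + 1" by (rule Ept3[OF n1])
    show "\<And>Q. pt (board n) Q \<Longrightarrow> True \<Longrightarrow> cl3 n (e3 n Q)" using Ecl3[OF n1] by blast
    show "\<And>P. pt (board (Suc n)) P \<Longrightarrow> cl3 n P \<Longrightarrow> e3 n (rem n P) = P" by (rule R3[OF n1])
    show "\<And>P. pt (board (Suc n)) P \<Longrightarrow> cl3 n P \<Longrightarrow> True" by simp
    show "\<And>Q. pt (board n) Q \<Longrightarrow> rem n (e3 n Q) = Q" by (rule Re3)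
    show "\<And>P. pt (board (Suc n)) P \<Longrightarrow> pt (board n) (rem n P)" by (rule rem_pt[OF n1])
  qed (rule k)
  then show ?thesis unfolding d_def by simp
qed

lemma cnt4: "1 \<le> k \<Longrightarrow> card {P. division (Suc n) k P \<and> cl4 n P} = d (k-1) n"
proof -
  assume k: "1 \<le> k"
  have "card {P. division (Suc n) k P \<and> cl4 n P} = card {Q. division n (k-1) Q \<and> True}"
  proof (rule count_gen[where e="e4 n" and c=1 and X="\<lambda>_. True"])
    show "\<And>Q. pt (board n) Q \<Longrightarrow> pt (board (Suc n)) (e4 n Q) \<and> card (e4 n Q) = card Q + 1" by (rule Ept4[OF n1])
    show "\<And>Q. pt (board n) Q \<Longrightarrow> True \<Longrightarrow> cl4 n (e4 n Q)" using Ecl4[OF n1] by blast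
    show "\<And>P. pt (board (Suc n)) P \<Longrightarrow> cl4 n P \<Longrightarrow> e4 n (rem n P) = P" by (rule R4[OF n1])
    show "\<And>P. pt (board (Suc n)) P \<Longrightarrow> cl4 n P \<Longrightarrow> True" by simp
    show "\<And>Q. pt (board n) Q \<Longrightarrow> rem n (e4 n Q) = Q" by (rule Re4)
    show "\<And>P. pt (board (Suc n)) P \<Longrightarrow> pt (board n) (rem n P)" by (rule rem_pt[OF n1])
  qed (rule k)
  then show ?thesis unfolding d_def by simp
qed

lemma cnt5: "card {P. division (Suc n) k P \<and> cl5 n P} = s k n"
proof -
  have "card {P. division (Suc n) k P \<and> cl5 n P} = card {Q. division n (k-0) Q \<and> sep n Q}"
  proof (rule count_gen[where e="e5 n" and c=0 and X="sep n"])
    show "\<And>Q. pt (board n) Q \<Longrightarrow> pt (board (Suc n)) (e5 n Q) \<and> card (e5 n Q) = card Q + 0" using Ept5[OF n1] by simp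
    show "\<And>Q. pt (board n) Q \<Longrightarrow> sep n Q \<Longrightarrow> cl5 n (e5 n Q)" using Ecl5[OF n1] by blast
    show "\<And>P. pt (board (Suc n)) P \<Longrightarrow> cl5 n P \<Longrightarrow> e5 n (rem n P) = P" by (rule R5[OF n1])
    show "\<And>P. pt (board (Suc n)) P \<Longrightarrow> cl5 n P \<Longrightarrow> sep n (rem n P)" by (rule Sep5[OF n1])
    show "\<And>Q. pt (board n) Q \<Longrightarrow> rem n (e5 n Q) = Q" by (rule Re5)
    show "\<And>P. pt (board (Suc n)) P \<Longrightarrow> pt (board n) (rem n P)" by (rule rem_pt[OF n1])
  qed simp
  then show ?thesis unfolding s_def sep_def by simp
qed

lemma cnt6: "card {P. division (Suc n) k P \<and> cl6 n P} = d k n"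
proof -
  have "card {P. division (Suc n) k P \<and> cl6 n P} = card {Q. division n (k-0) Q \<and> True}"
  proof (rule count_gen[where e="e6 n" and c=0 and X="\<lambda>_. True"])
    show "\<And>Q. pt (board n) Q \<Longrightarrow> pt (board (Suc n)) (e6 n Q) \<and> card (e6 n Q) = card Q + 0" using Ept6[OF n1] by simp
    show "\<And>Q. pt (board n) Q \<Longrightarrow> True \<Longrightarrow> cl6 n (e6 n Q)" using Ecl6[OF n1] by blast
    show "\<And>P. pt (board (Suc n)) P \<Longrightarrow> cl6 n P \<Longrightarrow> e6 n (rem n P) = P" by (rule R6[OF n1])
    show "\<And>P. pt (board (Suc n)) P \<Longrightarrow> cl6 n P \<Longrightarrow> True" by simp
    show "\<And>Q. pt (board n) Q \<Longrightarrow> rem n (e6 n Q) = Q" by (rule Re6)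
    show "\<And>P. pt (board (Suc n)) P \<Longrightarrow> pt (board n) (rem n P)" by (rule rem_pt[OF n1])
  qed simp
  then show ?thesis unfolding d_def by simp
qed

lemma cnt7: "card {P. division (Suc n) k P \<and> cl7 n P} = s k n"
proof -
  have "card {P. division (Suc n) k P \<and> cl7 n P} = card {Q. division n (k-0) Q \<and> sep n Q}"
  proof (rule count_gen[where e="e7 n" and c=0 and X="sep n"])
    show "\<And>Q. pt (board n) Q \<Longrightarrow> pt (board (Suc n)) (e7 n Q) \<and> card (e7 n Q) = card Q + 0" using Ept7[OF n1] by simp
    show "\<And>Q. pt (board n) Q \<Longrightarrow> sep n Q \<Longrightarrow> cl7 n (e7 n Q)" using Ecl7[OF n1] by blast
    show "\<And>P. pt (board (Suc n)) P \<Longrightarrow> cl7 n P \<Longrightarrow> e7 n (rem n P) = P" by (rule R7[OF n1])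
    show "\<And>P. pt (board (Suc n)) P \<Longrightarrow> cl7 n P \<Longrightarrow> sep n (rem n P)" by (rule Sep7[OF n1])
    show "\<And>Q. pt (board n) Q \<Longrightarrow> rem n (e7 n Q) = Q" by (rule Re7)
    show "\<And>P. pt (board (Suc n)) P \<Longrightarrow> pt (board n) (rem n P)" by (rule rem_pt[OF n1])
  qed simp
  then show ?thesis unfolding s_def sep_def by simp
qed

lemma fin_div: "finite {P. division m k P}"
proof (rule finite_subset)
  show "{P. division m k P} \<subseteq> Pow (Pow (board m))" unfolding division_def by blast
  show "finite (Pow (Pow (board m)))" unfolding board_def by simp
qed

lemma main: assumes k: "2 \<le> k" shows "d k (Suc n) = d (k-2) n + 3 * d (k-1) n + d k n + 2 * s k n"
proof -
  define C1 where "C1 = {P. division (Suc n) k P \<and> cl1 n P}"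
  define C2 where "C2 = {P. division (Suc n) k P \<and> cl2 n P}"
  define C3 where "C3 = {P. division (Suc n) k P \<and> cl3 n P}"
  define C4 where "C4 = {P. division (Suc n) k P \<and> cl4 n P}"
  define C5 where "C5 = {P. division (Suc n) k P \<and> cl5 n P}"
  define C6 where "C6 = {P. division (Suc n) k P \<and> cl6 n P}"
  define C7 where "C7 = {P. division (Suc n) k P \<and> cl7 n P}"
  define S where "S = {P. division (Suc n) k P}"
  have ptS: "\<And>P. division (Suc n) k P \<Longrightarrow> pt (board (Suc n)) P" using division_pt by blast
  have fS: "finite S" unfolding S_def by (rule fin_div)
  have sub: "C1 \<subseteq> S" "C2 \<subseteq> S" "C3 \<subseteq> S" "C4 \<subseteq> S" "C5 \<subseteq> S" "C6 \<subseteq> S" "C7 \<subseteq> S"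
    unfolding S_def C1_def C2_def C3_def C4_def C5_def C6_def C7_def by blast+
  have f: "finite C1" "finite C2" "finite C3" "finite C4" "finite C5" "finite C6" "finite C7"
    using finite_subset[OF _ fS] sub by blast+
  have cov: "S = C1 \<union> C2 \<union> C3 \<union> C4 \<union> C5 \<union> C6 \<union> C7"
  proof (rule equalityI)
    show "S \<subseteq> C1 \<union> C2 \<union> C3 \<union> C4 \<union> C5 \<union> C6 \<union> C7"
    proof
      fix P assume "P \<in> S"
      then have P: "division (Suc n) k P" unfolding S_def by blast
      have "cl1 n P \<or> cl2 n P \<or> cl3 n P \<or> cl4 n P \<or> cl5 n P \<or> cl6 n P \<or> cl7 n P"
        using cover[OF n1 ptS[OF P]] .
      then show "P \<in> C1 \<union> C2 \<union> C3 \<union> C4 \<union> C5 \<union> C6 \<union> C7"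
        unfolding C1_def C2_def C3_def C4_def C5_def C6_def C7_def using P by blast
    qed
  qed (use sub in blast)
  have d12: "C1 \<inter> C2 = {}"
  proof (rule ccontr)
    assume "C1 \<inter> C2 \<noteq> {}"
    then obtain P where "division (Suc n) k P" "cl1 n P" "cl2 n P" unfolding C1_def C2_def by blast
    then show False using x12[OF n1 ptS] by blast
  qed
  have d13: "C1 \<inter> C3 = {}"
  proof (rule ccontr)
    assume "C1 \<inter> C3 \<noteq> {}"
    then obtain P where "division (Suc n) k P" "cl1 n P" "cl3 n P" unfolding C1_def C3_def by blast
    then show False using x13[OF n1] by blast
  qed
  have d14: "C1 \<inter> C4 = {}"
  proof (rule ccontr)
    assume "C1 \<inter> C4 \<noteq> {}"
    then obtain P where "division (Suc n) k P" "cl1 n P" "cl4 n P" unfolding C1_def C4_def by blast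
    then show False using x14[OF n1] by blast
  qed
  have d15: "C1 \<inter> C5 = {}"
  proof (rule ccontr)
    assume "C1 \<inter> C5 \<noteq> {}"
    then obtain P where "division (Suc n) k P" "cl1 n P" "cl5 n P" unfolding C1_def C5_def by blast
    then show False using x15[OF n1] by blast
  qed
  have d16: "C1 \<inter> C6 = {}"
  proof (rule ccontr)
    assume "C1 \<inter> C6 \<noteq> {}"
    then obtain P where "division (Suc n) k P" "cl1 n P" "cl6 n P" unfolding C1_def C6_def by blast
    then show False using x16[OF n1 ptS] by blast
  qed
  have d17: "C1 \<inter> C7 = {}"
  proof (rule ccontr)
    assume "C1 \<inter> C7 \<noteq> {}"
    then obtain P where "division (Suc n) k P" "cl1 n P" "cl7 n P" unfolding C1_def C7_def by blast
    then show False using x17[OF n1 ptS] by blast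
  qed
  have d23: "C2 \<inter> C3 = {}"
  proof (rule ccontr)
    assume "C2 \<inter> C3 \<noteq> {}"
    then obtain P where "division (Suc n) k P" "cl2 n P" "cl3 n P" unfolding C2_def C3_def by blast
    then show False using x23[OF n1 ptS] by blast
  qed
  have d24: "C2 \<inter> C4 = {}"
  proof (rule ccontr)
    assume "C2 \<inter> C4 \<noteq> {}"
    then obtain P where "division (Suc n) k P" "cl2 n P" "cl4 n P" unfolding C2_def C4_def by blast
    then show False using x24[OF n1 ptS] by blast
  qed
  have d25: "C2 \<inter> C5 = {}"
  proof (rule ccontr)
    assume "C2 \<inter> C5 \<noteq> {}"
    then obtain P where "division (Suc n) k P" "cl2 n P" "cl5 n P" unfolding C2_def C5_def by blast
    then show False using x25[OF n1] by blast
  qed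
  have d26: "C2 \<inter> C6 = {}"
  proof (rule ccontr)
    assume "C2 \<inter> C6 \<noteq> {}"
    then obtain P where "division (Suc n) k P" "cl2 n P" "cl6 n P" unfolding C2_def C6_def by blast
    then show False using x26[OF n1 ptS] by blast
  qed
  have d27: "C2 \<inter> C7 = {}"
  proof (rule ccontr)
    assume "C2 \<inter> C7 \<noteq> {}"
    then obtain P where "division (Suc n) k P" "cl2 n P" "cl7 n P" unfolding C2_def C7_def by blast
    then show False using x27[OF n1 ptS] by blast
  qed
  have d34: "C3 \<inter> C4 = {}"
  proof (rule ccontr)
    assume "C3 \<inter> C4 \<noteq> {}"
    then obtain P where "division (Suc n) k P" "cl3 n P" "cl4 n P" unfolding C3_def C4_def by blast
    then show False using x34[OF n1] by blast
  qed
  have d35: "C3 \<inter> C5 = {}"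
  proof (rule ccontr)
    assume "C3 \<inter> C5 \<noteq> {}"
    then obtain P where "division (Suc n) k P" "cl3 n P" "cl5 n P" unfolding C3_def C5_def by blast
    then show False using x35[OF n1] by blast
  qed
  have d36: "C3 \<inter> C6 = {}"
  proof (rule ccontr)
    assume "C3 \<inter> C6 \<noteq> {}"
    then obtain P where "division (Suc n) k P" "cl3 n P" "cl6 n P" unfolding C3_def C6_def by blast
    then show False using x36[OF n1 ptS] by blast
  qed
  have d37: "C3 \<inter> C7 = {}"
  proof (rule ccontr)
    assume "C3 \<inter> C7 \<noteq> {}"
    then obtain P where "division (Suc n) k P" "cl3 n P" "cl7 n P" unfolding C3_def C7_def by blast
    then show False using x37[OF n1 ptS] by blast
  qed
  have d45: "C4 \<inter> C5 = {}"
  proof (rule ccontr)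
    assume "C4 \<inter> C5 \<noteq> {}"
    then obtain P where "division (Suc n) k P" "cl4 n P" "cl5 n P" unfolding C4_def C5_def by blast
    then show False using x45[OF n1] by blast
  qed
  have d46: "C4 \<inter> C6 = {}"
  proof (rule ccontr)
    assume "C4 \<inter> C6 \<noteq> {}"
    then obtain P where "division (Suc n) k P" "cl4 n P" "cl6 n P" unfolding C4_def C6_def by blast
    then show False using x46[OF n1 ptS] by blast
  qed
  have d47: "C4 \<inter> C7 = {}"
  proof (rule ccontr)
    assume "C4 \<inter> C7 \<noteq> {}"
    then obtain P where "division (Suc n) k P" "cl4 n P" "cl7 n P" unfolding C4_def C7_def by blast
    then show False using x47[OF n1 ptS] by blast
  qed
  have d56: "C5 \<inter> C6 = {}"
  proof (rule ccontr)
    assume "C5 \<inter> C6 \<noteq> {}"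
    then obtain P where "division (Suc n) k P" "cl5 n P" "cl6 n P" unfolding C5_def C6_def by blast
    then show False using x56[OF n1] by blast
  qed
  have d57: "C5 \<inter> C7 = {}"
  proof (rule ccontr)
    assume "C5 \<inter> C7 \<noteq> {}"
    then obtain P where "division (Suc n) k P" "cl5 n P" "cl7 n P" unfolding C5_def C7_def by blast
    then show False using x57[OF n1] by blast
  qed
  have d67: "C6 \<inter> C7 = {}"
  proof (rule ccontr)
    assume "C6 \<inter> C7 \<noteq> {}"
    then obtain P where "division (Suc n) k P" "cl6 n P" "cl7 n P" unfolding C6_def C7_def by blast
    then show False using x67[OF n1 ptS] by blast
  qed
  have "card S = card C1 + card C2 + card C3 + card C4 + card C5 + card C6 + card C7"
  proof -
    have e6: "card (C1 \<union> C2 \<union> C3 \<union> C4 \<union> C5 \<union> C6 \<union> C7) = card (C1 \<union> C2 \<union> C3 \<union> C4 \<union> C5 \<union> C6) + card C7"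
      by (rule card_Un_disjoint) (use f d17 d27 d37 d47 d57 d67 in blast)+
    have e5: "card (C1 \<union> C2 \<union> C3 \<union> C4 \<union> C5 \<union> C6) = card (C1 \<union> C2 \<union> C3 \<union> C4 \<union> C5) + card C6"
      by (rule card_Un_disjoint) (use f d16 d26 d36 d46 d56 in blast)+
    have e4: "card (C1 \<union> C2 \<union> C3 \<union> C4 \<union> C5) = card (C1 \<union> C2 \<union> C3 \<union> C4) + card C5"
      by (rule card_Un_disjoint) (use f d15 d25 d35 d45 in blast)+
    have e3: "card (C1 \<union> C2 \<union> C3 \<union> C4) = card (C1 \<union> C2 \<union> C3) + card C4"
      by (rule card_Un_disjoint) (use f d14 d24 d34 in blast)+
    have e2: "card (C1 \<union> C2 \<union> C3) = card (C1 \<union> C2) + card C3"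
      by (rule card_Un_disjoint) (use f d13 d23 in blast)+
    have e1: "card (C1 \<union> C2) = card C1 + card C2"
      by (rule card_Un_disjoint) (use f d12 in blast)+
    show ?thesis unfolding cov e6 e5 e4 e3 e2 e1 ..
  qed
  moreover have "card C1 = d (k-2) n" unfolding C1_def using cnt1 k by blast
  moreover have "card C2 = d (k-1) n" unfolding C2_def using cnt2 k by simp
  moreover have "card C3 = d (k-1) n" unfolding C3_def using cnt3 k by simp
  moreover have "card C4 = d (k-1) n" unfolding C4_def using cnt4 k by simp
  moreover have "card C5 = s k n" unfolding C5_def by (rule cnt5)
  moreover have "card C6 = d k n" unfolding C6_def by (rule cnt6)
  moreover have "card C7 = s k n" unfolding C7_def by (rule cnt7)
  moreover have "d k (Suc n) = card S" unfolding S_def d_def ..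
  ultimately show ?thesis by simp
qed

end

theorem theorem1:
  fixes n k :: nat
  assumes "n \<ge> 1" and "k \<ge> 2"
  shows "d k (n + 1) = d (k - 2) n + 3 * d (k - 1) n + d k n + 2 * s k n"
  using main[OF assms] by simp


end
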